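(* Let $m\ge 2$ be an integer and $n'=2^{2m-1}-2^m-2^{m-1}$. Let $\mathbf{C}$ be a binary linear $[2^{2m}-1,3m]$ code whose set of nonzero weights is $\{2^{2m-1}-2^{m-1},\,2^{2m-1},\,2^{2m-1}+2^{m-1}\}$. Then the code $\mathbf{C}'$ obtained from $\mathbf{C}$ by the extension construction is a minimal binary linear code with parameters $[2^{2m}-1+n',\ 3m,\ 2^{2m-1}-2^{m-1}]_2$ and maximum weight $2^{2m}-2^m$, and it violates the Ashikhmin–Barg condition.
   Context: Extension construction for a binary linear $[N,K]$ code $\mathbf{D}$ with $K\ge2$, minimum nonzero weight $w_{min}$, maximum weight $w_{max}$ and $n'=2w_{min}-w_{max}\ge 1$: choose a basis $\mathbf{r}_1,\dots,\mathbf{r}_K$ with $wt(\mathbf{r}_1)=w_{max}$, $wt(\mathbf{r}_2)=w_{min}$; the extended code is generated by $(\mathbf{1},\mathbf{r}_1),(\mathbf{0},\mathbf{r}_2),\dots,(\mathbf{0},\mathbf{r}_K)$ in $\mathbf{F}_2^{n'+N}$, where $\mathbf{1},\mathbf{0}\in\mathbf{F}_2^{n'}$ are all-one and zero vectors. Minimal code: any two nonzero codewords with nested supports are equal (binary case). Ashikhmin–Barg condition (binary): $w_{min}/w_{max}>1/2$. (Codes $\mathbf{C}$ as in the hypothesis exist, e.g. the Kasami codes.) *)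

theory Defs
  imports Complex_Main
begin

text \<open>Binary vectors of length N are represented by their supports, i.e. subsets of
  {0..<N}; vector addition over F_2 is symmetric difference, the zero vector is {},
  and the Hamming weight is the cardinality of the support.\<close>

definition vadd :: "nat set \<Rightarrow> nat set \<Rightarrow> nat set" where
  "vadd a b = (a - b) \<union> (b - a)"

definition lincomb :: "(nat \<Rightarrow> nat set) \<Rightarrow> nat set \<Rightarrow> nat set" where
  "lincomb r S = {x. odd (card {i\<in>S. x \<in> r i})}"

definition span2 :: "nat \<Rightarrow> (nat \<Rightarrow> nat set) \<Rightarrow> nat set set" where
  "span2 K r = lincomb r ` Pow {0..<K}"

definition binary_linear :: "nat \<Rightarrow> nat set set \<Rightarrow> bool" where
  "binary_linear N C \<longleftrightarrow> C \<subseteq> Pow {0..<N} \<and> {} \<in> C \<and> (\<forall>a\<in>C. \<forall>b\<in>C. vadd a b \<in> C)"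

definition is_basis :: "nat set set \<Rightarrow> nat \<Rightarrow> (nat \<Rightarrow> nat set) \<Rightarrow> bool" where
  "is_basis C K r \<longleftrightarrow> span2 K r = C \<and> inj_on (lincomb r) (Pow {0..<K})"

definition binary_linear_code :: "nat \<Rightarrow> nat \<Rightarrow> nat set set \<Rightarrow> bool" where
  "binary_linear_code N K C \<longleftrightarrow> binary_linear N C \<and> (\<exists>r. is_basis C K r)"

definition nonzero_weights :: "nat set set \<Rightarrow> nat set" where
  "nonzero_weights C = {card c | c. c \<in> C \<and> c \<noteq> {}}"

definition wmin :: "nat set set \<Rightarrow> nat" where
  "wmin C = Min (nonzero_weights C)"

definition wmax :: "nat set set \<Rightarrow> nat" where
  "wmax C = Max (nonzero_weights C)"

definition min_distance :: "nat set set \<Rightarrow> nat" where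
  "min_distance C = Min {card (vadd a b) | a b. a \<in> C \<and> b \<in> C \<and> a \<noteq> b}"

definition binary_linear_code_params :: "nat \<Rightarrow> nat \<Rightarrow> nat \<Rightarrow> nat set set \<Rightarrow> bool" where
  "binary_linear_code_params N K d C \<longleftrightarrow> binary_linear_code N K C \<and> min_distance C = d"

definition minimal_code :: "nat set set \<Rightarrow> bool" where
  "minimal_code C \<longleftrightarrow> (\<forall>a\<in>C. \<forall>b\<in>C. a \<noteq> {} \<longrightarrow> b \<noteq> {} \<longrightarrow> a \<subseteq> b \<longrightarrow> a = b)"

definition ashikhmin_barg :: "nat set set \<Rightarrow> bool" where
  "ashikhmin_barg C \<longleftrightarrow> real (wmin C) / real (wmax C) > 1 / 2"

text \<open>With basis r 0 (the r_1 of the paper, of weight wmax D),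
  r 1 (the r_2, of weight wmin D), ..., r (K-1), and n' = 2 wmin D - wmax D, the
  extended code is generated by (1, r 0), (0, r 1), ..., (0, r (K-1)) in F_2^(n'+N);
  the first n' coordinates are positions 0..<n', the coordinates of D are shifted by n'.\<close>
definition ext_nprime :: "nat set set \<Rightarrow> nat" where
  "ext_nprime D = 2 * wmin D - wmax D"

definition ext_generators :: "nat set set \<Rightarrow> (nat \<Rightarrow> nat set) \<Rightarrow> nat \<Rightarrow> nat set" where
  "ext_generators D r i =
     (if i = 0 then {0..<ext_nprime D} \<union> (\<lambda>x. x + ext_nprime D) ` r 0
      else (\<lambda>x. x + ext_nprime D) ` r i)"

definition extension_code :: "nat set set \<Rightarrow> nat \<Rightarrow> (nat \<Rightarrow> nat set) \<Rightarrow> nat set set" where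
  "extension_code D K r = span2 K (ext_generators D r)"

end

theory Submission imports Defs begin

lemma lincomb_empty: "lincomb r {} = {}" by (simp add: lincomb_def)

lemma lincomb_single: "lincomb r {i} = r i"
proof -
  have "{j\<in>{i}. x \<in> r j} = (if x \<in> r i then {i} else {})" for x by auto
  then show ?thesis by (auto simp: lincomb_def)
qed

lemma lincomb_add:
  assumes "finite S" "finite T"
  shows "lincomb r ((S-T)\<union>(T-S)) = vadd (lincomb r S) (lincomb r T)"
proof (rule set_eqI)
  fix x
  define A where "A = {i\<in>S. x \<in> r i}"
  define B where "B = {i\<in>T. x \<in> r i}"
  have fA: "finite A" "finite B" using assms by (auto simp: A_def B_def)
  have e: "{i\<in>(S-T)\<union>(T-S). x \<in> r i} = (A-B) \<union> (B-A)" by (auto simp: A_def B_def)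
  have c1: "card ((A-B)\<union>(B-A)) = card (A-B) + card (B-A)"
    by (rule card_Un_disjoint) (use fA in auto)
  have c2: "card A = card (A-B) + card (A\<inter>B)"
    by (metis Diff_Diff_Int Int_lower1 card_Diff_subset card_mono fA(1) finite_Diff le_add_diff_inverse2 Int_commute add.commute card_Diff_subset_Int finite_Int)
  have c3: "card B = card (B-A) + card (A\<inter>B)"
    by (metis Int_commute Int_lower1 card_Diff_subset_Int card_mono fA(2) finite_Int le_add_diff_inverse2)
  have "odd (card ((A-B)\<union>(B-A))) \<longleftrightarrow> \<not> (odd (card A) \<longleftrightarrow> odd (card B))"
    unfolding c1 c2 c3 by presburger
  then show "x \<in> lincomb r ((S-T)\<union>(T-S)) \<longleftrightarrow> x \<in> vadd (lincomb r S) (lincomb r T)"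
  proof -
    have "x \<in> lincomb r ((S-T)\<union>(T-S)) \<longleftrightarrow> odd (card ((A-B)\<union>(B-A)))"
      unfolding lincomb_def using e by simp
    moreover have "x \<in> lincomb r S \<longleftrightarrow> odd (card A)" "x \<in> lincomb r T \<longleftrightarrow> odd (card B)"
      unfolding lincomb_def A_def B_def by simp_all
    ultimately show ?thesis using \<open>odd (card ((A-B)\<union>(B-A))) \<longleftrightarrow> _\<close> unfolding vadd_def by blast
  qed
qed

lemma lincomb_ext:
  "lincomb (ext_generators D r) S =
     (if 0 \<in> S then {0..<ext_nprime D} else {}) \<union> (\<lambda>x. x + ext_nprime D) ` lincomb r S"
proof (rule set_eqI)
  fix x
  let ?n = "ext_nprime D"
  show "x \<in> lincomb (ext_generators D r) S \<longleftrightarrow> x \<in> (if 0 \<in> S then {0..<?n} else {}) \<union> (\<lambda>x. x + ?n) ` lincomb r S"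
  proof (cases "x < ?n")
    case True
    have "{i\<in>S. x \<in> ext_generators D r i} = {i\<in>S. i = 0}"
      using True by (auto simp: ext_generators_def)
    moreover have "{i\<in>S. i = 0} = (if 0 \<in> S then {0} else {})" by auto
    ultimately show ?thesis using True by (auto simp: lincomb_def)
  next
    case False
    then obtain y where y: "x = y + ?n" by (metis add.commute le_Suc_ex not_less)
    have "{i\<in>S. x \<in> ext_generators D r i} = {i\<in>S. y \<in> r i}"
      using y by (auto simp: ext_generators_def)
    then show ?thesis using y False by (auto simp: lincomb_def)
  qed
qed


theorem proposition4p2:
  fixes m :: nat and C :: "nat set set" and r :: "nat \<Rightarrow> nat set"
  assumes "m \<ge> 2"
    and "binary_linear_code (2^(2*m) - 1) (3*m) C"
    and "nonzero_weights C = {2^(2*m-1) - 2^(m-1), 2^(2*m-1), 2^(2*m-1) + 2^(m-1)}"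
    and "is_basis C (3*m) r"
    and "card (r 0) = wmax C"
    and "card (r 1) = wmin C"
  shows "minimal_code (extension_code C (3*m) r)
    \<and> binary_linear_code_params (2^(2*m) - 1 + (2^(2*m-1) - 2^m - 2^(m-1))) (3*m)
          (2^(2*m-1) - 2^(m-1)) (extension_code C (3*m) r)
    \<and> wmax (extension_code C (3*m) r) = 2^(2*m) - 2^m
    \<and> \<not> ashikhmin_barg (extension_code C (3*m) r)"
proof -
  define K where "K = 3*m"
  define n where "n = ext_nprime C"
  define g where "g = ext_generators C r"
  define E where "E = extension_code C (3*m) r"
  define p :: nat where "p = 2^(m-1)"
  define q :: nat where "q = p*p"
  have m1: "m = Suc (m-1)" using assms(1) by simp
  have p2: "p \<ge> 2" unfolding p_def using assms(1)
    by (metis One_nat_def Suc_le_eq diff_Suc_1 le_diff_conv numeral_2_eq_2 one_less_numeral_iff power_increasing_iff power_one_right semiring_norm(76) less_imp_le nat_le_linear not_less Suc_pred less_eq_Suc_le power_increasing zero_less_two)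
  have qp: "q \<ge> 2*p" unfolding q_def using p2 by simp
  have e1: "(2::nat)^m = 2*p" unfolding p_def by (subst m1) simp
  have e2: "(2::nat)^(2*m-1) = 2*q"
  proof -
    have h: "2*m-1 = Suc ((m-1)+(m-1))" using assms(1) by simp
    show ?thesis unfolding q_def p_def h power_Suc power_add by simp
  qed
  have e3: "(2::nat)^(2*m) = 4*q"
  proof -
    have h: "2*m = Suc (Suc ((m-1)+(m-1)))" using assms(1) by simp
    show ?thesis unfolding q_def p_def h power_Suc power_add by simp
  qed
  define w1 where "w1 = 2*q - p"
  define w3 where "w3 = 2*q + p"
  have W: "nonzero_weights C = {w1, 2*q, w3}"
    using assms(3) unfolding e2 w1_def w3_def p_def by simp
  have wminC: "wmin C = w1" unfolding wmin_def W w1_def w3_def using qp by (auto simp: min_def)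
  have wmaxC: "wmax C = w3" unfolding wmax_def W w1_def w3_def using qp by (auto simp: max_def)
  have nval: "n = 2*q - 3*p" unfolding n_def ext_nprime_def wminC wmaxC w1_def w3_def using qp by simp
  have n1: "n \<ge> 1" using nval qp p2 by simp
  define N where "N = 4*q - 1"
  have CP: "C \<subseteq> Pow {0..<N}" and Cz: "{} \<in> C"
    using assms(2) unfolding binary_linear_code_def binary_linear_def N_def e3 by auto
  have spanC: "span2 K r = C" and injr: "inj_on (lincomb r) (Pow {0..<K})"
    using assms(4) unfolding is_basis_def K_def by auto
  have inC: "lincomb r S \<in> C" if "S \<subseteq> {0..<K}" for S
    using spanC that unfolding span2_def by auto
  have subN: "lincomb r S \<subseteq> {0..<N}" if "S \<subseteq> {0..<K}" for S
    using inC[OF that] CP by auto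
  have finr: "finite (lincomb r S)" if "S \<subseteq> {0..<K}" for S
    using subN[OF that] finite_subset by blast
  have nzr: "lincomb r S \<noteq> {}" if "S \<subseteq> {0..<K}" "S \<noteq> {}" for S
  proof
    assume "lincomb r S = {}"
    then have "lincomb r S = lincomb r {}" by (simp add: lincomb_empty)
    then have "S = {}" using injr that(1) by (auto dest: inj_onD)
    then show False using that(2) by simp
  qed
  have wC: "card (lincomb r S) \<in> {w1, 2*q, w3}" if "S \<subseteq> {0..<K}" "S \<noteq> {}" for S
  proof -
    have "card (lincomb r S) \<in> nonzero_weights C"
      unfolding nonzero_weights_def using inC[OF that(1)] nzr[OF that] by blast
    then show ?thesis using W by simp
  qed
  have dec: "lincomb g S = (if 0 \<in> S then {0..<n} else {}) \<union> (\<lambda>x. x + n) ` lincomb r S" for S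
    unfolding g_def n_def by (rule lincomb_ext)
  have cardg: "card (lincomb g S) = (if 0 \<in> S then n else 0) + card (lincomb r S)"
    if "S \<subseteq> {0..<K}" for S
  proof -
    have "card (lincomb g S) = card (if 0 \<in> S then {0..<n} else {}) + card ((\<lambda>x. x + n) ` lincomb r S)"
      unfolding dec by (rule card_Un_disjoint) (use finr[OF that] in auto)
    moreover have "card ((\<lambda>x. x + n) ` lincomb r S) = card (lincomb r S)"
      by (rule card_image) (auto simp: inj_on_def)
    ultimately show ?thesis by simp
  qed
  have zer: "0 \<in> lincomb g S \<longleftrightarrow> 0 \<in> S" for S
    using n1 unfolding dec by auto
  have Edef: "E = lincomb g ` Pow {0..<K}"
    unfolding E_def extension_code_def span2_def g_def K_def ..
  have subE: "lincomb g S \<subseteq> {0..<n + N}" if "S \<subseteq> {0..<K}" for S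
    using subN[OF that] unfolding dec by auto
  have gz: "lincomb g S \<noteq> {}" if "S \<subseteq> {0..<K}" "S \<noteq> {}" for S
    using nzr[OF that] unfolding dec by auto
  have vaddg: "vadd (lincomb g S) (lincomb g T) = lincomb g ((S-T)\<union>(T-S))"
    if "S \<subseteq> {0..<K}" "T \<subseteq> {0..<K}" for S T
    using lincomb_add[of S T g] that finite_subset by (metis finite_atLeastLessThan)
  have wtE: "w1 \<le> card c \<and> card c \<le> n + w3 \<and> (0 \<in> c \<longrightarrow> n + w1 \<le> card c) \<and> (0 \<notin> c \<longrightarrow> card c \<le> w3)"
    if cE: "c \<in> E" "c \<noteq> {}" for c
  proof -
    obtain S where S: "S \<subseteq> {0..<K}" "c = lincomb g S" using cE(1) unfolding Edef by auto
    have "S \<noteq> {}" using cE(2) S by (auto simp: lincomb_empty)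
    then have "card (lincomb r S) \<in> {w1, 2*q, w3}" using wC S by blast
    then show ?thesis using cardg[OF S(1)] zer[of S] S(2) qp unfolding w1_def w3_def by auto
  qed
  have linE: "binary_linear (n + N) E"
    unfolding binary_linear_def
  proof (intro conjI ballI)
    show "E \<subseteq> Pow {0..<n + N}" using subE Edef by auto
    show "{} \<in> E" unfolding Edef by (rule image_eqI[of _ _ "{}"]) (auto simp: lincomb_empty)
    fix a b assume "a \<in> E" "b \<in> E"
    then obtain S T where "S \<subseteq> {0..<K}" "T \<subseteq> {0..<K}" "a = lincomb g S" "b = lincomb g T"
      unfolding Edef by auto
    then show "vadd a b \<in> E" using vaddg Edef by auto
  qed
  have injg: "inj_on (lincomb g) (Pow {0..<K})"
  proof (rule inj_onI)
    fix S T assume ST: "S \<in> Pow {0..<K}" "T \<in> Pow {0..<K}" "lincomb g S = lincomb g T"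
    have rec: "lincomb r U = {y. y + n \<in> lincomb g U}" for U
      unfolding dec by auto
    have "lincomb r S = lincomb r T" using ST(3) rec by simp
    then show "S = T" using injr ST(1,2) by (auto dest: inj_onD)
  qed
  have codeE: "binary_linear_code (n + N) K E"
    unfolding binary_linear_code_def is_basis_def using linE injg
    by (auto simp: Edef span2_def)
  have K1: "1 < K" "0 < K" using assms(1) K_def by auto
  have in1: "w1 \<in> nonzero_weights E"
  proof -
    have "lincomb g {1} \<in> E" using Edef K1 by auto
    moreover have "card (lincomb g {1}) = w1"
      using cardg[of "{1}"] K1 assms(6) wminC by (simp add: lincomb_single)
    moreover have "lincomb g {1} \<noteq> {}" using gz[of "{1}"] K1 by auto
    ultimately show ?thesis unfolding nonzero_weights_def by blast
  qed
  have in3: "n + w3 \<in> nonzero_weights E"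
  proof -
    have "lincomb g {0} \<in> E" using Edef K1 by auto
    moreover have "card (lincomb g {0}) = n + w3"
      using cardg[of "{0}"] K1 assms(5) wmaxC by (simp add: lincomb_single)
    moreover have "lincomb g {0} \<noteq> {}" using gz[of "{0}"] K1 by auto
    ultimately show ?thesis unfolding nonzero_weights_def by (smt (verit) mem_Collect_eq)
  qed
  have finE: "finite (nonzero_weights E)"
  proof -
    have "finite E" using Edef by simp
    then show ?thesis unfolding nonzero_weights_def by simp
  qed
  have bnd: "w1 \<le> x \<and> x \<le> n + w3" if "x \<in> nonzero_weights E" for x
    using that wtE unfolding nonzero_weights_def by blast
  have wminE: "wmin E = w1" unfolding wmin_def
    by (rule Min_eqI) (use finE in1 bnd in auto)
  have wmaxE: "wmax E = n + w3" unfolding wmax_def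
    by (rule Max_eqI) (use finE in3 bnd in auto)
  have mdE: "min_distance E = w1"
  proof -
    have "{card (vadd a b) | a b. a \<in> E \<and> b \<in> E \<and> a \<noteq> b} = nonzero_weights E"
    proof
      show "{card (vadd a b) | a b. a \<in> E \<and> b \<in> E \<and> a \<noteq> b} \<subseteq> nonzero_weights E"
      proof
        fix x assume "x \<in> {card (vadd a b) | a b. a \<in> E \<and> b \<in> E \<and> a \<noteq> b}"
        then obtain a b where ab: "a \<in> E" "b \<in> E" "a \<noteq> b" "x = card (vadd a b)" by blast
        have "vadd a b \<in> E" using linE ab unfolding binary_linear_def by blast
        moreover have "vadd a b \<noteq> {}" using ab(3) unfolding vadd_def by auto
        ultimately show "x \<in> nonzero_weights E" using ab(4) unfolding nonzero_weights_def by blast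
      qed
      show "nonzero_weights E \<subseteq> {card (vadd a b) | a b. a \<in> E \<and> b \<in> E \<and> a \<noteq> b}"
      proof
        fix x assume "x \<in> nonzero_weights E"
        then obtain c where c: "c \<in> E" "c \<noteq> {}" "x = card c" unfolding nonzero_weights_def by blast
        have "{} \<in> E" using linE unfolding binary_linear_def by blast
        moreover have "vadd c {} = c" unfolding vadd_def by auto
        ultimately show "x \<in> {card (vadd a b) | a b. a \<in> E \<and> b \<in> E \<and> a \<noteq> b}" using c by force
      qed
    qed
    then show ?thesis unfolding min_distance_def using wminE unfolding wmin_def by simp
  qed
  have minE: "minimal_code E"
    unfolding minimal_code_def
  proof (intro ballI impI)
    fix a b assume ab: "a \<in> E" "b \<in> E" "a \<noteq> {}" "b \<noteq> {}" "a \<subseteq> b"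
    show "a = b"
    proof (rule ccontr)
      assume ne: "a \<noteq> b"
      define d where "d = vadd a b"
      have dE: "d \<in> E" using linE ab unfolding binary_linear_def d_def by blast
      have dd: "d = b - a" using ab(5) unfolding d_def vadd_def by auto
      have dnz: "d \<noteq> {}" using ne ab(5) dd by auto
      have finb: "finite b" using ab(2) linE unfolding binary_linear_def
        by (meson PowD finite_atLeastLessThan finite_subset subsetD)
      have cb: "card b = card a + card d"
        using dd ab(5) finb by (metis card_Diff_subset card_mono finite_subset le_add_diff_inverse)
      have z: "0 \<in> b \<longleftrightarrow> 0 \<in> a \<or> 0 \<in> d" using dd ab(5) by auto
      have A: "w1 \<le> card a \<and> card a \<le> n + w3 \<and> (0 \<in> a \<longrightarrow> n + w1 \<le> card a) \<and> (0 \<notin> a \<longrightarrow> card a \<le> w3)"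
        using wtE ab by blast
      have B: "w1 \<le> card b \<and> card b \<le> n + w3 \<and> (0 \<in> b \<longrightarrow> n + w1 \<le> card b) \<and> (0 \<notin> b \<longrightarrow> card b \<le> w3)"
        using wtE ab by blast
      have D: "w1 \<le> card d \<and> card d \<le> n + w3 \<and> (0 \<in> d \<longrightarrow> n + w1 \<le> card d) \<and> (0 \<notin> d \<longrightarrow> card d \<le> w3)"
        using wtE dE dnz by blast
      have ar: "w3 < 2*w1" unfolding w1_def w3_def using qp p2 by simp
      show False using A B D z cb ar by auto
    qed
  qed
  have lenEq: "2^(2*m) - 1 + (2^(2*m-1) - 2^m - 2^(m-1)) = n + N"
    unfolding e1 e2 e3 N_def nval p_def[symmetric] using qp p2 by simp
  have dEq: "(2::nat)^(2*m-1) - 2^(m-1) = w1" unfolding e2 w1_def p_def by simp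
  have wEq: "(2::nat)^(2*m) - 2^m = n + w3" unfolding e1 e3 nval w3_def using qp p2 by simp
  have AB: "\<not> ashikhmin_barg E"
  proof -
    have "n + w3 = 2 * w1" unfolding nval w1_def w3_def using qp p2 by simp
    then have "real (wmax E) = 2 * real (wmin E)" using wminE wmaxE by simp
    moreover have "wmin E > 0" using wminE qp p2 unfolding w1_def by simp
    ultimately show ?thesis unfolding ashikhmin_barg_def by simp
  qed
  show ?thesis
    unfolding lenEq dEq wEq E_def[symmetric] K_def[symmetric]
    using minE codeE mdE wmaxE AB unfolding binary_linear_code_params_def E_def K_def by simp
qed

end
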